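(* For every $n\ge 1$ and every $2$-colouring of the edges of $Q_n$, there is a monochromatic geodesic of length $\lceil n/2\rceil$.
   Context: The hypercube $Q_n$ has vertex set $\{0,1\}^n$, two vertices adjacent iff they differ in exactly one coordinate; the direction of an edge is that coordinate. A path is a geodesic if no two of its edges have the same direction; length is the number of edges. A path is monochromatic if all its edges receive the same colour. *)

theory Defs
  imports Complex_Main
begin

text \<open>Hypercube Q_n: vertices are subsets of {0..<n} (identified with 0/1 vectors via
  indicator), two vertices adjacent iff their symmetric difference has exactly one element;
  that element is the direction of the edge. Edges are unordered pairs {A, B}.\<close>

definition hc_vertex :: "nat \<Rightarrow> nat set \<Rightarrow> bool" where
  "hc_vertex n A \<longleftrightarrow> A \<subseteq> {..<n}"

definition hc_adj :: "nat \<Rightarrow> nat set \<Rightarrow> nat set \<Rightarrow> bool" where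
  "hc_adj n A B \<longleftrightarrow> hc_vertex n A \<and> hc_vertex n B \<and> card ((A - B) \<union> (B - A)) = 1"

definition hc_dir :: "nat set \<Rightarrow> nat set \<Rightarrow> nat" where
  "hc_dir A B = the_elem ((A - B) \<union> (B - A))"

text \<open>A path given by its vertex list; its length is (length vs - 1) edges.\<close>
definition hc_path :: "nat \<Rightarrow> nat set list \<Rightarrow> bool" where
  "hc_path n vs \<longleftrightarrow> vs \<noteq> [] \<and> (\<forall>i. Suc i < length vs \<longrightarrow> hc_adj n (vs ! i) (vs ! Suc i))"

definition hc_geodesic :: "nat \<Rightarrow> nat set list \<Rightarrow> bool" where
  "hc_geodesic n vs \<longleftrightarrow> hc_path n vs \<and>
     inj_on (\<lambda>i. hc_dir (vs ! i) (vs ! Suc i)) {i. Suc i < length vs}"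

definition monochromatic :: "(nat set set \<Rightarrow> bool) \<Rightarrow> nat set list \<Rightarrow> bool" where
  "monochromatic c vs \<longleftrightarrow> (\<exists>col. \<forall>i. Suc i < length vs \<longrightarrow> c {vs ! i, vs ! Suc i} = col)"

end

theory Submission
  imports Defs
begin

definition good :: "nat \<Rightarrow> (nat set set \<Rightarrow> bool) \<Rightarrow> bool \<Rightarrow> nat set \<Rightarrow> nat set \<Rightarrow> nat \<Rightarrow> bool" where
  "good n c col D v L \<longleftrightarrow> (\<exists>vs. hc_geodesic n vs \<and> hd vs = v \<and> length vs = Suc L \<and>
     (\<forall>i. Suc i < length vs \<longrightarrow> hc_dir (vs!i) (vs!Suc i) \<in> D \<and> c {vs!i, vs!Suc i} = col))"

lemma good_zero: "hc_vertex n v \<Longrightarrow> good n c col D v 0"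
  unfolding good_def hc_geodesic_def hc_path_def
  by (rule exI[of _ "[v]"]) auto

lemma good_mono: "good n c col D v L \<Longrightarrow> D \<subseteq> D' \<Longrightarrow> good n c col D' v L"
  unfolding good_def by blast

lemma good_trunc:
  assumes "good n c col D v L" "L' \<le> L"
  shows "good n c col D v L'"
proof -
  obtain vs where vs: "hc_geodesic n vs" "hd vs = v" "length vs = Suc L"
    "\<forall>i. Suc i < length vs \<longrightarrow> hc_dir (vs!i) (vs!Suc i) \<in> D \<and> c {vs!i, vs!Suc i} = col"
    using assms(1) unfolding good_def by blast
  define ws where "ws = take (Suc L') vs"
  have len: "length ws = Suc L'" using vs(3) assms(2) by (simp add: ws_def)
  have nth: "ws ! i = vs ! i" if "i < Suc L'" for i using that by (simp add: ws_def)
  have lt: "Suc i < length vs" if "Suc i < length ws" for i using that len vs(3) assms(2) by simp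
  have P: "hc_path n ws"
    unfolding hc_path_def
  proof (intro conjI allI impI)
    show "ws \<noteq> []" using len by auto
    fix i assume i: "Suc i < length ws"
    have "hc_adj n (vs ! i) (vs ! Suc i)" using vs(1) lt[OF i] unfolding hc_geodesic_def hc_path_def by blast
    moreover have "ws ! i = vs ! i" "ws ! Suc i = vs ! Suc i" using nth i len by simp_all
    ultimately show "hc_adj n (ws ! i) (ws ! Suc i)" by simp
  qed
  have I: "inj_on (\<lambda>i. hc_dir (ws ! i) (ws ! Suc i)) {i. Suc i < length ws}"
  proof (rule inj_onI)
    fix i j assume i: "i \<in> {i. Suc i < length ws}" and j: "j \<in> {i. Suc i < length ws}"
      and eq: "hc_dir (ws ! i) (ws ! Suc i) = hc_dir (ws ! j) (ws ! Suc j)"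
    have inj: "inj_on (\<lambda>i. hc_dir (vs ! i) (vs ! Suc i)) {i. Suc i < length vs}"
      using vs(1) unfolding hc_geodesic_def by blast
    have i': "Suc i < length vs" and j': "Suc j < length vs" using i j lt by auto
    have "ws ! i = vs ! i" "ws ! Suc i = vs ! Suc i" "ws ! j = vs ! j" "ws ! Suc j = vs ! Suc j"
      using nth i j len by simp_all
    then have "hc_dir (vs ! i) (vs ! Suc i) = hc_dir (vs ! j) (vs ! Suc j)" using eq by simp
    then show "i = j" using inj i' j' unfolding inj_on_def by blast
  qed
  have H: "hd ws = v" using vs(2) vs(3) unfolding ws_def by (simp add: hd_take)
  have C: "\<forall>i. Suc i < length ws \<longrightarrow> hc_dir (ws!i) (ws!Suc i) \<in> D \<and> c {ws!i, ws!Suc i} = col"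
  proof (intro allI impI)
    fix i assume i: "Suc i < length ws"
    have "ws ! i = vs ! i" "ws ! Suc i = vs ! Suc i" using nth i len by simp_all
    then show "hc_dir (ws!i) (ws!Suc i) \<in> D \<and> c {ws!i, ws!Suc i} = col"
      using vs(4) lt[OF i] by simp
  qed
  show ?thesis unfolding good_def hc_geodesic_def
    using P I C H len by blast
qed

lemma good_prepend:
  assumes adj: "hc_adj n w u" and dir: "hc_dir w u = d" and dD: "d \<notin> D"
    and g: "good n c col D u L" and col: "c {w, u} = col"
  shows "good n c col (insert d D) w (Suc L)"
proof -
  obtain vs where vs: "hc_geodesic n vs" "hd vs = u" "length vs = Suc L"
    "\<forall>i. Suc i < length vs \<longrightarrow> hc_dir (vs!i) (vs!Suc i) \<in> D \<and> c {vs!i, vs!Suc i} = col"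
    using g unfolding good_def by blast
  have ne: "vs \<noteq> []" using vs(3) by auto
  have v0: "vs ! 0 = u" using vs(2) ne by (simp add: hd_conv_nth)
  define ws where "ws = w # vs"
  have P: "hc_path n ws"
    unfolding hc_path_def ws_def
  proof (intro conjI allI impI)
    fix i assume "Suc i < length (w # vs)"
    then show "hc_adj n ((w # vs) ! i) ((w # vs) ! Suc i)"
      using vs(1) adj v0 unfolding hc_geodesic_def hc_path_def
      by (cases i) auto
  qed simp
  have I: "inj_on (\<lambda>i. hc_dir (ws ! i) (ws ! Suc i)) {i. Suc i < length ws}"
  proof (rule inj_onI)
    fix i j assume i: "i \<in> {i. Suc i < length ws}" and j: "j \<in> {i. Suc i < length ws}"
      and eq: "hc_dir (ws ! i) (ws ! Suc i) = hc_dir (ws ! j) (ws ! Suc j)"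
    have dirs: "\<And>k. Suc k < length vs \<Longrightarrow> hc_dir (vs!k) (vs!Suc k) \<in> D" using vs(4) by blast
    show "i = j"
    proof (cases i)
      case 0
      then show ?thesis
      proof (cases j)
        case (Suc j')
        then have "hc_dir (vs!j') (vs!Suc j') = d" using eq 0 v0 dir by (simp add: ws_def)
        moreover have "Suc j' < length vs" using j Suc by (simp add: ws_def)
        ultimately show ?thesis using dirs dD by fastforce
      qed simp
    next
      case (Suc i')
      then show ?thesis
      proof (cases j)
        case 0
        then have "hc_dir (vs!i') (vs!Suc i') = d" using eq Suc v0 dir by (simp add: ws_def)
        moreover have "Suc i' < length vs" using i Suc by (simp add: ws_def)
        ultimately show ?thesis using dirs dD by fastforce
      next
        case (Suc j')
        have "inj_on (\<lambda>i. hc_dir (vs ! i) (vs ! Suc i)) {i. Suc i < length vs}"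
          using vs(1) unfolding hc_geodesic_def by blast
        moreover have "Suc i' < length vs" "Suc j' < length vs" using i j \<open>i = Suc i'\<close> Suc by (auto simp: ws_def)
        moreover have "hc_dir (vs!i') (vs!Suc i') = hc_dir (vs!j') (vs!Suc j')"
          using eq \<open>i = Suc i'\<close> Suc by (simp add: ws_def)
        ultimately show ?thesis using \<open>i = Suc i'\<close> Suc by (auto simp: inj_on_def)
      qed
    qed
  qed
  have C: "\<forall>i. Suc i < length ws \<longrightarrow> hc_dir (ws!i) (ws!Suc i) \<in> insert d D \<and> c {ws!i, ws!Suc i} = col"
  proof (intro allI impI)
    fix i assume "Suc i < length ws"
    then show "hc_dir (ws!i) (ws!Suc i) \<in> insert d D \<and> c {ws!i, ws!Suc i} = col"
      using vs(4) v0 dir col by (cases i) (auto simp: ws_def)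
  qed
  show ?thesis unfolding good_def hc_geodesic_def
    using P I C vs(3) by (intro exI[of _ ws]) (auto simp: ws_def)
qed

lemma adj_insert:
  assumes "hc_vertex n v" "d < n" "d \<notin> v"
  shows "hc_adj n v (insert d v)" "hc_adj n (insert d v) v"
    "hc_dir v (insert d v) = d" "hc_dir (insert d v) v = d"
proof -
  have e1: "(v - insert d v) \<union> (insert d v - v) = {d}" using assms by auto
  have e2: "(insert d v - v) \<union> (v - insert d v) = {d}" using assms by auto
  have vi: "hc_vertex n (insert d v)" using assms unfolding hc_vertex_def by auto
  show "hc_adj n v (insert d v)" "hc_adj n (insert d v) v"
    unfolding hc_adj_def using e1 e2 vi assms(1) by auto
  show "hc_dir v (insert d v) = d" "hc_dir (insert d v) v = d"
    unfolding hc_dir_def using e1 e2 by auto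
qed

lemma max_pair: "(a::nat) + b + 2 \<le> max a (Suc b) + max b (Suc a)"
  by (simp add: max_def)

lemma claim:
  assumes "finite D"
  shows "D \<subseteq> {..<n} \<Longrightarrow> B \<subseteq> {..<n} \<Longrightarrow> B \<inter> D = {} \<Longrightarrow>
    \<exists>g. (\<forall>T\<in>Pow D. \<forall>col. good n c col D (B \<union> T) (g T col)) \<and>
        card D * 2 ^ card D \<le> (\<Sum>T\<in>Pow D. g T True + g T False)"
  using assms
proof (induction D arbitrary: B rule: finite_induct)
  case empty
  then show ?case
    by (intro exI[of _ "\<lambda>_ _. 0"]) (auto intro!: good_zero simp: hc_vertex_def)
next
  case (insert d D')
  have dn: "d < n" using insert.prems by auto
  have dB: "d \<notin> B" using insert.prems by auto
  obtain g0 where g0: "\<forall>T\<in>Pow D'. \<forall>col. good n c col D' (B \<union> T) (g0 T col)"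
      "card D' * 2 ^ card D' \<le> (\<Sum>T\<in>Pow D'. g0 T True + g0 T False)"
    using insert.IH[of B] insert.prems by auto
  obtain g1 where g1: "\<forall>T\<in>Pow D'. \<forall>col. good n c col D' (insert d B \<union> T) (g1 T col)"
      "card D' * 2 ^ card D' \<le> (\<Sum>T\<in>Pow D'. g1 T True + g1 T False)"
    using insert.IH[of "insert d B"] insert.prems insert.hyps by auto
  define e where "e T = c {B \<union> T, insert d (B \<union> T)}" for T
  define g where "g T col = (if d \<notin> T then
       (if col = e T then max (g0 T col) (Suc (g1 T col)) else g0 T col)
     else (if col = e (T - {d}) then max (g1 (T - {d}) col) (Suc (g0 (T - {d}) col))
           else g1 (T - {d}) col))" for T col
  have vert: "\<And>T. T \<subseteq> D' \<Longrightarrow> hc_vertex n (B \<union> T)" using insert.prems by (auto simp: hc_vertex_def)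
  have good: "\<forall>T\<in>Pow (insert d D'). \<forall>col. good n c col (insert d D') (B \<union> T) (g T col)"
  proof (intro ballI allI)
    fix T col assume T: "T \<in> Pow (insert d D')"
    show "good n c col (insert d D') (B \<union> T) (g T col)"
    proof (cases "d \<in> T")
      case False
      then have TD: "T \<subseteq> D'" using T by auto
      have dv: "d \<notin> B \<union> T" using False dB by auto
      have a: "good n c col (insert d D') (B \<union> T) (g0 T col)"
        using g0(1) TD by (auto intro: good_mono)
      have b: "col = e T \<Longrightarrow> good n c col (insert d D') (B \<union> T) (Suc (g1 T col))"
      proof -
        assume ce: "col = e T"
        have "good n c col D' (insert d (B \<union> T)) (g1 T col)" using g1(1) TD by auto
        then show ?thesis
          using good_prepend[OF adj_insert(1)[OF vert[OF TD] dn dv] adj_insert(3)[OF vert[OF TD] dn dv] insert.hyps(2)]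
            ce e_def by auto
      qed
      show ?thesis using a b False unfolding g_def by (auto simp: max_def)
    next
      case True
      define T' where "T' = T - {d}"
      have TD: "T' \<subseteq> D'" using T by (auto simp: T'_def)
      have dv: "d \<notin> B \<union> T'" using dB by (auto simp: T'_def)
      have eqv: "B \<union> T = insert d (B \<union> T')" using True by (auto simp: T'_def)
      have a: "good n c col (insert d D') (B \<union> T) (g1 T' col)"
        using g1(1) TD eqv by (auto intro: good_mono)
      have b: "col = e T' \<Longrightarrow> good n c col (insert d D') (B \<union> T) (Suc (g0 T' col))"
      proof -
        assume ce: "col = e T'"
        have "good n c col D' (B \<union> T') (g0 T' col)" using g0(1) TD by auto
        moreover have "c {insert d (B \<union> T'), B \<union> T'} = col" using ce e_def by (simp add: insert_commute)
        ultimately show ?thesis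
          using good_prepend[OF adj_insert(2)[OF vert[OF TD] dn dv] adj_insert(4)[OF vert[OF TD] dn dv] insert.hyps(2)]
            eqv by auto
      qed
      show ?thesis using a b True unfolding g_def T'_def[symmetric] by (auto simp: max_def)
    qed
  qed
  have disj: "Pow D' \<inter> insert d ` Pow D' = {}" using insert.hyps by auto
  have inj: "inj_on (insert d) (Pow D')" using insert.hyps by (auto simp: inj_on_def)
  have split: "(\<Sum>T\<in>Pow (insert d D'). g T True + g T False) =
      (\<Sum>T\<in>Pow D'. (g T True + g T False) + (g (insert d T) True + g (insert d T) False))"
    by (simp add: Pow_insert sum.union_disjoint[OF _ _ disj] insert.hyps sum.reindex[OF inj] sum.distrib)
  have pt: "(g0 T True + g0 T False) + (g1 T True + g1 T False) + 2 \<le>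
      (g T True + g T False) + (g (insert d T) True + g (insert d T) False)" if "T \<in> Pow D'" for T
  proof -
    have dT: "d \<notin> T" using that insert.hyps by auto
    have r: "insert d T - {d} = T" using dT by auto
    show ?thesis
      using max_pair[of "g0 T True" "g1 T True"] max_pair[of "g0 T False" "g1 T False"]
      unfolding g_def using dT r by (cases "e T") auto
  qed
  have "(\<Sum>T\<in>Pow D'. (g0 T True + g0 T False) + (g1 T True + g1 T False) + 2) \<le>
      (\<Sum>T\<in>Pow D'. (g T True + g T False) + (g (insert d T) True + g (insert d T) False))"
    by (rule sum_mono) (use pt in auto)
  moreover have "(\<Sum>T\<in>Pow D'. (g0 T True + g0 T False) + (g1 T True + g1 T False) + 2) =
      (\<Sum>T\<in>Pow D'. g0 T True + g0 T False) + (\<Sum>T\<in>Pow D'. g1 T True + g1 T False) + 2 * 2 ^ card D'"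
  proof -
    have cp: "card (Pow D') = 2 ^ card D'" using insert.hyps by (simp add: card_Pow)
    show ?thesis by (simp only: sum.distrib sum_constant cp) simp
  qed
  ultimately have le: "(\<Sum>T\<in>Pow D'. g0 T True + g0 T False) + (\<Sum>T\<in>Pow D'. g1 T True + g1 T False) + 2 * 2 ^ card D'
     \<le> (\<Sum>T\<in>Pow (insert d D'). g T True + g T False)"
    using split by linarith
  have ce: "card (insert d D') * 2 ^ card (insert d D') = card D' * 2 ^ card D' + card D' * 2 ^ card D' + 2 * 2 ^ card D'"
    using insert.hyps by (simp add: algebra_simps)
  have "card (insert d D') * 2 ^ card (insert d D') \<le> (\<Sum>T\<in>Pow (insert d D'). g T True + g T False)"
    unfolding ce using le g0(2) g1(2) by linarith
  then show ?case by (intro exI[of _ g] conjI good)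
qed

theorem corollary10:
  fixes n :: nat and c :: "nat set set \<Rightarrow> bool"
  assumes "n \<ge> 1"
  shows "\<exists>vs. hc_geodesic n vs \<and> monochromatic c vs \<and>
           length vs = nat \<lceil>real n / 2\<rceil> + 1"
proof -
  obtain g where g: "\<forall>T\<in>Pow {..<n}. \<forall>col. good n c col {..<n} ({} \<union> T) (g T col)"
      "n * 2 ^ n \<le> (\<Sum>T\<in>Pow {..<n}. g T True + g T False)"
    using claim[of "{..<n}" n "{}" c] by auto
  have "\<exists>T\<in>Pow {..<n}. n \<le> g T True + g T False"
  proof (rule ccontr)
    assume neg: "\<not> ?thesis"
    have "\<forall>T\<in>Pow {..<n}. g T True + g T False \<le> n - 1"
    proof
      fix T assume "T \<in> Pow {..<n}"
      then have "\<not> n \<le> g T True + g T False" using neg by blast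
      then show "g T True + g T False \<le> n - 1" by arith
    qed
    then have "(\<Sum>T\<in>Pow {..<n}. g T True + g T False) \<le> (\<Sum>T\<in>Pow {..<n}. n - 1)"
      by (intro sum_mono) auto
    also have "\<dots> = 2 ^ n * (n - 1)" by (simp add: card_Pow)
    also have "\<dots> < n * 2 ^ n" using assms by simp
    finally show False using g(2) by simp
  qed
  then obtain T where T: "T \<in> Pow {..<n}" "n \<le> g T True + g T False" by blast
  define k where "k = nat \<lceil>real n / 2\<rceil>"
  have k2: "2 * k \<le> n + 1"
  proof -
    have "\<lceil>real n / 2\<rceil> \<le> (int n + 1) div 2"
    proof -
      have "real n / 2 \<le> real_of_int ((int n + 1) div 2)"
      proof (cases "even n")
        case True then obtain m where "n = 2*m" by blast
        then show ?thesis by simp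
      next
        case False then obtain m where "n = 2*m+1" using oddE by blast
        then show ?thesis by simp
      qed
      then show ?thesis by (simp add: ceiling_le_iff)
    qed
    then show ?thesis unfolding k_def by linarith
  qed
  have "k \<le> g T True \<or> k \<le> g T False" using T(2) k2 by linarith
  then obtain col where col: "k \<le> g T col" by blast
  have "good n c col {..<n} T k"
    using good_trunc[OF _ col] g(1) T(1) by auto
  then obtain vs where vs: "hc_geodesic n vs" "length vs = Suc k"
    "\<forall>i. Suc i < length vs \<longrightarrow> c {vs!i, vs!Suc i} = col"
    unfolding good_def by blast
  then show ?thesis unfolding monochromatic_def k_def by auto
qed

end
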